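(* Let $A\in\mathbb{Z}^{\ell\times n}$ and $\bm{b}\in\mathbb{Z}^\ell$, and let $\Delta$ be an upper bound on the absolute values of all subdeterminants of $A$. If the system $A\bm{x}\le\bm{b}$ has an integral solution $\bm{x}\in\mathbb{Z}^n$, then it has an integral solution of the form $D\bm{b}+\bm{d}$, where $D\in\mathbb{Q}^{n\times\ell}$ and $\bm{d}\in\mathbb{Q}^n$ satisfy $\|D\|_{\mathrm{frac}}\le\Delta$ and $\|\bm{d}\|_{\mathrm{frac}}\le n\Delta^2$.
   Context: A subdeterminant of $A$ is the determinant of a square submatrix of $A$ (obtained by selecting some rows and equally many columns). For a rational vector or matrix $M$, $\|M\|_{\mathrm{frac}}$ denotes the maximum, over all entries of $M$, of the absolute values of the numerator and the denominator of the entry (written as a fraction $p/q$ with integers $p,q$, $q\neq0$; it suffices that some such representation satisfies the bound). Inequalities between vectors are componentwise. *)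

theory Defs
  imports "Jordan_Normal_Form.DL_Submatrix" "Jordan_Normal_Form.Determinant"
begin

definition frac_le :: "rat \<Rightarrow> int \<Rightarrow> bool" where
  "frac_le x B \<longleftrightarrow> (\<exists>p q :: int. q \<noteq> 0 \<and> x = of_int p / of_int q \<and> \<bar>p\<bar> \<le> B \<and> \<bar>q\<bar> \<le> B)"

definition frac_norm_mat_le :: "rat mat \<Rightarrow> int \<Rightarrow> bool" where
  "frac_norm_mat_le M B \<longleftrightarrow> (\<forall>i < dim_row M. \<forall>j < dim_col M. frac_le (M $$ (i, j)) B)"

definition frac_norm_vec_le :: "rat vec \<Rightarrow> int \<Rightarrow> bool" where
  "frac_norm_vec_le v B \<longleftrightarrow> (\<forall>i < dim_vec v. frac_le (v $ i) B)"

definition subdet_bound :: "int mat \<Rightarrow> int \<Rightarrow> bool" where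
  "subdet_bound A \<Delta> \<longleftrightarrow> (\<forall>I J. I \<subseteq> {..<dim_row A} \<longrightarrow> J \<subseteq> {..<dim_col A} \<longrightarrow>
      card I = card J \<longrightarrow> \<bar>det (submatrix A I J)\<bar> \<le> \<Delta>)"

end

theory Submission
  imports Defs
begin


definition minor :: "(nat \<Rightarrow> nat \<Rightarrow> 'a::comm_ring_1) \<Rightarrow> nat list \<Rightarrow> nat list \<Rightarrow> 'a" where
  "minor M rs cs = det (mat (length rs) (length rs) (\<lambda>(a,b). M (rs!a) (cs!b)))"

definition dl :: "nat \<Rightarrow> nat list \<Rightarrow> nat list" where
  "dl c xs = take c xs @ drop (Suc c) xs"

lemma length_dl: "c < length xs \<Longrightarrow> length (dl c xs) = length xs - 1"
  unfolding dl_def by auto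

lemma dl_nth: "c < length xs \<Longrightarrow> b < length xs - 1 \<Longrightarrow> dl c xs ! b = xs ! (if b < c then b else Suc b)"
  unfolding dl_def by (auto simp: nth_append min_def)

lemma set_dl: "set (dl c xs) \<subseteq> set xs"
  unfolding dl_def using set_take_subset set_drop_subset by fastforce

lemma distinct_dl: "distinct xs \<Longrightarrow> distinct (dl c xs)"
  unfolding dl_def by (simp add: distinct_take distinct_drop set_take_disj_set_drop_if_distinct)

lemma dl_snoc: "dl (length xs) (xs @ [j]) = xs"
  unfolding dl_def by auto

lemma minor_border:
  assumes len: "length cs = Suc (length rs)"
  shows "minor M (r#rs) cs = (\<Sum>c<length cs. M r (cs!c) * ((-1)^c * minor M rs (dl c cs)))"
proof -
  define k where "k = length rs"
  define B where "B = mat (Suc k) (Suc k) (\<lambda>(a,b). M ((r#rs)!a) (cs!b))"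
  have Bc: "B \<in> carrier_mat (Suc k) (Suc k)" unfolding B_def by auto
  have "minor M (r#rs) cs = det B" unfolding minor_def B_def k_def by simp
  also have "\<dots> = (\<Sum>j<Suc k. B $$ (0,j) * cofactor B 0 j)"
    by (rule laplace_expansion_row[OF Bc], simp)
  also have "\<dots> = (\<Sum>c<length cs. M r (cs!c) * ((-1)^c * minor M rs (dl c cs)))"
  proof (rule sum.cong)
    show "{..<Suc k} = {..<length cs}" using len k_def by simp
  next
    fix j assume j: "j \<in> {..<length cs}"
    have md: "mat_delete B 0 j = mat k k (\<lambda>(a,b). M (rs!a) (dl j cs ! b))"
      by (rule eq_matI, insert j len, auto simp: mat_delete_def B_def k_def dl_nth)
    show "B $$ (0,j) * cofactor B 0 j = M r (cs!j) * ((-1)^j * minor M rs (dl j cs))"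
      unfolding cofactor_def md minor_def using j len by (simp add: B_def k_def length_dl)
  qed
  finally show ?thesis .
qed

lemma minor_rep_row:
  assumes "r \<in> set rs" "length cs = Suc (length rs)"
  shows "minor M (r#rs) cs = 0"
proof -
  obtain a where a: "a < length rs" "rs ! a = r" using assms(1) by (metis in_set_conv_nth)
  show ?thesis unfolding minor_def
    by (rule det_identical_rows[of _ "Suc (length rs)" 0 "Suc a"], insert a assms, auto simp: Matrix.row_def intro!: eq_vecI)
qed

definition bvec :: "(nat \<Rightarrow> nat \<Rightarrow> 'a::comm_ring_1) \<Rightarrow> nat list \<Rightarrow> nat list \<Rightarrow> nat \<Rightarrow> 'a" where
  "bvec M rs cs j = (\<Sum>c<length cs. if cs!c = j then (-1)^c * minor M rs (dl c cs) else 0)"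

lemma bvec_nth: "distinct cs \<Longrightarrow> c < length cs \<Longrightarrow> bvec M rs cs (cs!c) = (-1)^c * minor M rs (dl c cs)"
  unfolding bvec_def
  by (subst sum.remove[of _ c], auto simp: nth_eq_iff_index_eq intro!: sum.neutral)

lemma bvec_out: "j \<notin> set cs \<Longrightarrow> bvec M rs cs j = 0"
  unfolding bvec_def by (auto intro!: sum.neutral)

lemma bvec_row:
  assumes "set cs \<subseteq> {..<n}" "length cs = Suc (length rs)"
  shows "(\<Sum>j<n. M r j * bvec M rs cs j) = minor M (r#rs) cs"
proof -
  have "(\<Sum>j<n. M r j * bvec M rs cs j) = (\<Sum>j<n. \<Sum>c<length cs. if cs!c = j then M r (cs!c) * ((-1)^c * minor M rs (dl c cs)) else 0)"
    unfolding bvec_def sum_distrib_left by (auto intro!: sum.cong)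
  also have "\<dots> = (\<Sum>c<length cs. \<Sum>j<n. if cs!c = j then M r (cs!c) * ((-1)^c * minor M rs (dl c cs)) else 0)"
    by (rule sum.swap)
  also have "\<dots> = (\<Sum>c<length cs. M r (cs!c) * ((-1)^c * minor M rs (dl c cs)))"
  proof (intro sum.cong refl)
    fix c assume c: "c \<in> {..<length cs}"
    then have "cs ! c \<in> set cs" by simp
    then have "cs ! c < n" using assms(1) by auto
    then show "(\<Sum>j<n. if cs!c = j then M r (cs!c) * ((-1)^c * minor M rs (dl c cs)) else 0) = M r (cs!c) * ((-1)^c * minor M rs (dl c cs))"
      by simp
  qed
  also have "\<dots> = minor M (r#rs) cs" by (rule minor_border[OF assms(2), symmetric])
  finally show ?thesis .
qed

lemma minor_of_int: "minor (\<lambda>i j. of_int (M i j)) rs cs = of_int (minor M rs cs)"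
proof -
  have "mat (length rs) (length rs) (\<lambda>(a,b). of_int (M (rs!a) (cs!b)) :: 'a) = map_mat of_int (mat (length rs) (length rs) (\<lambda>(a,b). M (rs!a) (cs!b)))"
    by (rule eq_matI, auto)
  then show ?thesis unfolding minor_def by (simp add: of_int_hom.hom_det)
qed



lemma perm_of_list:
  assumes "distinct rs" "set rs = R"
  defines "p \<equiv> \<lambda>a. if a < length rs then card {x\<in>R. x < rs!a} else a"
  shows "p permutes {0..<length rs}" "\<And>a. a < length rs \<Longrightarrow> pick R (p a) = rs ! a"
proof -
  have fR: "finite R" using assms(2) by auto
  have cR: "card R = length rs" using assms distinct_card by blast
  have pa: "p a = card {x\<in>R. x < rs!a}" if "a < length rs" for a using that unfolding p_def by simp
  have inR: "rs!a \<in> R" if "a < length rs" for a using that assms(2) by auto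
  have lt: "p a < length rs" if "a < length rs" for a
  proof -
    have "rs!a \<notin> {x\<in>R. x < rs!a}" by simp
    then have "{x\<in>R. x < rs!a} \<subset> R" using inR[OF that] by blast
    then have "card {x\<in>R. x < rs!a} < card R" by (rule psubset_card_mono[OF fR])
    then show ?thesis using pa[OF that] cR by simp
  qed
  show pk: "\<And>a. a < length rs \<Longrightarrow> pick R (p a) = rs ! a"
    using pa inR pick_card_in_set by metis
  have inj: "inj_on p {0..<length rs}"
  proof
    fix a b assume ab: "a \<in> {0..<length rs}" "b \<in> {0..<length rs}" "p a = p b"
    have "pick R (p a) = pick R (p b)" using ab(3) by simp
    then have "rs ! a = rs ! b" using pk ab(1,2) by simp
    then show "a = b" using ab assms(1) by (simp add: nth_eq_iff_index_eq)
  qed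
  have sub: "p ` {0..<length rs} \<subseteq> {0..<length rs}" using lt by auto
  have img: "p ` {0..<length rs} = {0..<length rs}"
    by (rule endo_inj_surj[OF _ sub inj], simp)
  have bij: "bij_betw p {0..<length rs} {0..<length rs}" unfolding bij_betw_def using inj img by simp
  have out: "p x = x" if "x \<notin> {0..<length rs}" for x using that unfolding p_def by simp
  show "p permutes {0..<length rs}"
    by (rule bij_imp_permutes[OF bij out])
qed
lemma abs_signof: "\<bar>(of_int (sign p) :: 'a :: linordered_idom)\<bar> = 1"
  by (simp add: sign_def)

lemma minor_submatrix:
  fixes A :: "int mat"
  assumes A: "A \<in> carrier_mat l n"
    and rs: "distinct rs" "set rs \<subseteq> {..<l}" and cs: "distinct cs" "set cs \<subseteq> {..<n}"
    and len: "length rs = length cs"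
  shows "\<bar>minor (\<lambda>i j. A $$ (i,j)) rs cs\<bar> = \<bar>det (submatrix A (set rs) (set cs))\<bar>"
proof -
  define k where "k = length rs"
  define S where "S = submatrix A (set rs) (set cs)"
  have c1: "card {i. i<dim_row A \<and> i\<in>set rs} = k"
  proof -
    have "{i. i<dim_row A \<and> i\<in>set rs} = set rs" using rs A by auto
    then show ?thesis using distinct_card[OF rs(1)] k_def by simp
  qed
  have c2: "card {i. i<dim_col A \<and> i\<in>set cs} = k"
  proof -
    have "{i. i<dim_col A \<and> i\<in>set cs} = set cs" using cs A by auto
    then show ?thesis using distinct_card[OF cs(1)] k_def len by simp
  qed
  have Sc: "S \<in> carrier_mat k k" unfolding S_def using c1 c2 by (auto simp: dim_submatrix)
  have Si: "S $$ (a,b) = A $$ (pick (set rs) a, pick (set cs) b)" if "a < k" "b < k" for a b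
    unfolding S_def by (rule submatrix_index, insert that c1 c2, auto)
  define p where "p = (\<lambda>a. if a < length rs then card {x\<in>set rs. x < rs!a} else a)"
  define q where "q = (\<lambda>a. if a < length cs then card {x\<in>set cs. x < cs!a} else a)"
  note pp = perm_of_list[OF rs(1) refl, folded p_def, folded k_def]
  note qq = perm_of_list[OF cs(1) refl, folded q_def, folded len, folded k_def]
  have p: "p permutes {0..<k}" "\<And>a. a < k \<Longrightarrow> pick (set rs) (p a) = rs ! a" using pp k_def by (auto simp: p_def)
  have q: "q permutes {0..<k}" "\<And>a. a < k \<Longrightarrow> pick (set cs) (q a) = cs ! a" using qq k_def len by (auto simp: q_def)
  have pk: "p a < k" if "a < k" for a using permutes_in_image[OF p(1)] that by auto
  have qk: "q a < k" if "a < k" for a using permutes_in_image[OF q(1)] that by auto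
  define T where "T = mat k k (\<lambda>(a,b). S $$ (a, q b))"
  have Tc: "T \<in> carrier_mat k k" unfolding T_def by auto
  have "mat k k (\<lambda>(a,b). A $$ (rs!a, cs!b)) = mat k k (\<lambda>(i,j). T $$ (p i, j))"
    by (rule eq_matI, auto simp: T_def Si pk qk p(2) q(2))
  then have "minor (\<lambda>i j. A $$ (i,j)) rs cs = signof p * det T"
    unfolding minor_def k_def[symmetric] using det_permute_rows[OF Tc p(1)] by simp
  moreover have "det T = signof q * det S"
  proof -
    have "det T = det (transpose_mat T)" using det_transpose[OF Tc] by simp
    also have "transpose_mat T = mat k k (\<lambda>(i,j). (transpose_mat S) $$ (q i, j))"
      by (rule eq_matI, insert Sc, auto simp: T_def qk)
    also have "det \<dots> = signof q * det (transpose_mat S)"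
      by (rule det_permute_rows[OF _ q(1)], insert Sc, auto)
    also have "det (transpose_mat S) = det S" using det_transpose[OF Sc] by simp
    finally show ?thesis .
  qed
  ultimately show ?thesis unfolding S_def by (simp add: abs_mult sign_def)
qed

lemma minor_bound:
  assumes A: "A \<in> carrier_mat l n" and D: "subdet_bound A \<Delta>"
    and rs: "distinct rs" "set rs \<subseteq> {..<l}" and cs: "distinct cs" "set cs \<subseteq> {..<n}"
    and len: "length rs = length cs"
  shows "\<bar>minor (\<lambda>i j. A $$ (i,j)) rs cs\<bar> \<le> \<Delta>"
proof -
  have "card (set rs) = card (set cs)" using distinct_card[OF rs(1)] distinct_card[OF cs(1)] len by simp
  moreover have "set rs \<subseteq> {..<dim_row A}" "set cs \<subseteq> {..<dim_col A}" using rs cs A by auto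
  ultimately have "\<bar>det (submatrix A (set rs) (set cs))\<bar> \<le> \<Delta>" using D unfolding subdet_bound_def by blast
  then show ?thesis unfolding minor_submatrix[OF assms(1,3-7)] .
qed

lemma Delta_ge1: assumes "subdet_bound A \<Delta>" shows "1 \<le> \<Delta>"
proof -
  have "submatrix A {} {} = 1\<^sub>m 0" by (rule eq_matI, auto simp: dim_submatrix)
  then show ?thesis using assms unfolding subdet_bound_def 
  proof -
    have "\<bar>det (submatrix A {} {})\<bar> \<le> \<Delta>" using assms unfolding subdet_bound_def by blast
    then show ?thesis using \<open>submatrix A {} {} = 1\<^sub>m 0\<close> by simp
  qed
qed




locale psetup =
  fixes A :: "int mat" and l n :: nat and \<Delta> :: int
  assumes A: "A \<in> carrier_mat l n" and Dl: "subdet_bound A \<Delta>"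
begin

definition Af :: "nat \<Rightarrow> nat \<Rightarrow> rat" where "Af i j = rat_of_int (A $$ (i,j))"

definition ap :: "nat \<Rightarrow> (nat \<Rightarrow> rat) \<Rightarrow> rat" where "ap i x = (\<Sum>j<n. Af i j * x j)"

lemma ap_lin: "ap i (\<lambda>k. x k + t * y k) = ap i x + t * ap i y"
  unfolding ap_def by (simp add: algebra_simps sum.distrib sum_distrib_left)

lemma ap_diff: "ap i (\<lambda>k. x k - y k) = ap i x - ap i y"
  unfolding ap_def by (simp add: algebra_simps sum_subtractf)

lemma ap_neg: "ap i (\<lambda>k. - y k) = - ap i y"
  unfolding ap_def by (simp add: sum_negf)

lemma ap_cong: "(\<And>j. j < n \<Longrightarrow> x j = y j) \<Longrightarrow> ap i x = ap i y"
  unfolding ap_def by auto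

lemma Delta1: "1 \<le> \<Delta>" using Delta_ge1[OF Dl] .

definition "good rs cs \<longleftrightarrow> distinct rs \<and> set rs \<subseteq> {..<l} \<and> distinct cs \<and> set cs \<subseteq> {..<n}"

lemma minor_Af: "minor Af rs cs = of_int (minor (\<lambda>i j. A $$ (i,j)) rs cs)"
  unfolding Af_def[abs_def] by (rule minor_of_int)

lemma minor_Af_int: "minor Af rs cs \<in> \<int>" unfolding minor_Af by simp

lemma minor_Af_bnd:
  assumes "good rs cs" "length rs = length cs"
  shows "\<bar>minor Af rs cs\<bar> \<le> of_int \<Delta>"
proof -
  have "\<bar>minor (\<lambda>i j. A $$ (i,j)) rs cs\<bar> \<le> \<Delta>"
    by (rule minor_bound[OF A Dl], insert assms, auto simp: good_def)
  then show ?thesis unfolding minor_Af by (metis of_int_abs of_int_le_iff)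
qed

lemma length_le_n: assumes "distinct cs" "set cs \<subseteq> {..<n}" shows "length cs \<le> n"
  using card_mono[OF _ assms(2)] distinct_card[OF assms(1)] by simp

lemma length_le_l: assumes "distinct cs" "set cs \<subseteq> {..<l}" shows "length cs \<le> l"
  using card_mono[OF _ assms(2)] distinct_card[OF assms(1)] by simp

lemma bvec_int: "bvec Af rs cs j \<in> \<int>"
  unfolding bvec_def using minor_Af_int
  by (intro Ints_sum, auto)

lemma bvec_bnd:
  assumes "good rs cs" "length cs = Suc (length rs)"
  shows "\<bar>bvec Af rs cs j\<bar> \<le> of_int \<Delta>"
proof (cases "j \<in> set cs")
  case True
  then obtain c where c: "c < length cs" "cs ! c = j" by (metis in_set_conv_nth)
  have g: "good rs (dl c cs)" using assms(1) set_dl[of c cs] distinct_dl[of cs c] unfolding good_def by auto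
  have "\<bar>bvec Af rs cs j\<bar> = \<bar>minor Af rs (dl c cs)\<bar>"
    using bvec_nth[of cs c Af rs] c assms(1) unfolding good_def by (simp add: abs_mult)
  also have "\<dots> \<le> of_int \<Delta>" by (rule minor_Af_bnd[OF g], insert c assms(2), simp add: length_dl)
  finally show ?thesis .
next
  case False
  then show ?thesis using bvec_out[OF False, of Af rs] Delta1 by simp
qed

lemma ap_bvec:
  assumes "set cs \<subseteq> {..<n}" "length cs = Suc (length rs)"
  shows "ap r (bvec Af rs cs) = minor Af (r#rs) cs"
  unfolding ap_def by (rule bvec_row[OF assms])

lemma bvec_last:
  assumes "distinct (cs @ [j])"
  shows "bvec Af rs (cs @ [j]) j = (-1)^(length cs) * minor Af rs cs"
  using bvec_nth[OF assms, of "length cs" Af rs] by (simp add: dl_snoc)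

definition "Inv b x rs cs \<longleftrightarrow> (\<forall>i<l. ap i x \<le> b i) \<and> good rs cs \<and> length rs = length cs
   \<and> minor Af rs cs \<noteq> 0 \<and> (\<forall>r\<in>set rs. ap r x = b r)"

definition "mu x cs = (n - length cs) * (n+1) + card {j. j < n \<and> x j \<noteq> 0 \<and> j \<notin> set cs}"

lemma basic_step:
  assumes inv: "Inv b x rs cs" and j: "j < n" "x j \<noteq> 0" "j \<notin> set cs"
  shows "\<exists>x' rs' cs'. Inv b x' rs' cs' \<and> mu x' cs' < mu x cs"
proof -
  from inv have feas: "\<forall>i<l. ap i x \<le> b i" and g: "good rs cs" and len: "length rs = length cs"
    and mnz: "minor Af rs cs \<noteq> 0" and tight: "\<forall>r\<in>set rs. ap r x = b r" unfolding Inv_def by auto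
  define cs' where "cs' = cs @ [j]"
  define v where "v = bvec Af rs cs'"
  have g': "good rs cs'" using g j unfolding good_def cs'_def by auto
  have len': "length cs' = Suc (length rs)" using len cs'_def by simp
  have vj: "v j \<noteq> 0" unfolding v_def cs'_def using bvec_last[of cs j rs] g' mnz
    unfolding good_def cs'_def by simp
  have vout: "v k = 0" if "k \<notin> set cs'" for k using bvec_out[OF that] v_def by simp
  have apv: "ap i v = minor Af (i#rs) cs'" for i unfolding v_def
    by (rule ap_bvec, insert g' len', auto simp: good_def)
  have apr: "ap r v = 0" if "r \<in> set rs" for r unfolding apv by (rule minor_rep_row[OF that len'])
  have card_lt: "card {k. k < n \<and> x' k \<noteq> 0 \<and> k \<notin> set cs} < card {k. k < n \<and> x k \<noteq> 0 \<and> k \<notin> set cs}"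
    if "x' j = 0" "\<And>k. k \<notin> set cs' \<Longrightarrow> x' k = x k" for x'
  proof (rule psubset_card_mono)
    show "{k. k < n \<and> x' k \<noteq> 0 \<and> k \<notin> set cs} \<subset> {k. k < n \<and> x k \<noteq> 0 \<and> k \<notin> set cs}"
    proof
      show "{k. k < n \<and> x' k \<noteq> 0 \<and> k \<notin> set cs} \<subseteq> {k. k < n \<and> x k \<noteq> 0 \<and> k \<notin> set cs}"
      proof
        fix k assume "k \<in> {k. k < n \<and> x' k \<noteq> 0 \<and> k \<notin> set cs}"
        then have k: "k < n" "x' k \<noteq> 0" "k \<notin> set cs" by auto
        then have "k \<noteq> j" using that(1) by auto
        then have "x' k = x k" using that(2) k unfolding cs'_def by auto
        then show "k \<in> {k. k < n \<and> x k \<noteq> 0 \<and> k \<notin> set cs}" using k by auto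
      qed
      show "{k. k < n \<and> x' k \<noteq> 0 \<and> k \<notin> set cs} \<noteq> {k. k < n \<and> x k \<noteq> 0 \<and> k \<notin> set cs}"
        using that j by blast
    qed
  qed auto
  show ?thesis
  proof (cases "\<forall>i<l. ap i v = 0")
    case True
    define x' where "x' = (\<lambda>k. x k + (- x j / v j) * v k)"
    have apx: "ap i x' = ap i x" if "i < l" for i unfolding x'_def ap_lin using True that by simp
    have apx2: "ap r x' = ap r x" if "r \<in> set rs" for r unfolding x'_def ap_lin using apr[OF that] by simp
    have "Inv b x' rs cs" unfolding Inv_def using feas g len mnz tight apx apx2 by auto
    moreover have "mu x' cs < mu x cs" unfolding mu_def
      by (intro add_strict_left_mono card_lt, insert vj vout, auto simp: x'_def)
    ultimately show ?thesis by blast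
  next
    case False
    then obtain i1 where i1: "i1 < l" "ap i1 v \<noteq> 0" by auto
    define u where "u = (if \<exists>i<l. ap i v > 0 then v else (\<lambda>k. - v k))"
    have apu: "ap i u = ap i v \<or> ap i u = - ap i v" for i unfolding u_def using ap_neg by auto
    have apu0: "ap i u = 0 \<longleftrightarrow> ap i v = 0" for i using apu[of i] by auto
    have upos: "\<exists>i<l. ap i u > 0"
    proof (cases "\<exists>i<l. ap i v > 0")
      case True then show ?thesis unfolding u_def by simp
    next
      case False
      then have "ap i1 v < 0" using i1 by force
      then show ?thesis unfolding u_def using False i1 ap_neg[of i1 v] by auto
    qed
    have uout: "u k = 0" if "k \<notin> set cs'" for k using vout[OF that] unfolding u_def by auto
    define I where "I = {i. i < l \<and> ap i u > 0}"
    define f where "f = (\<lambda>i. (b i - ap i x) / ap i u)"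
    have fI: "finite I" "I \<noteq> {}" using upos unfolding I_def by auto
    define t where "t = Min (f ` I)"
    have "t \<in> f ` I" unfolding t_def using fI by (intro Min_in, auto)
    then obtain i0 where i0: "i0 \<in> I" "f i0 = t" by auto
    have tle: "t \<le> f i" if "i \<in> I" for i unfolding t_def using fI that by auto
    have t0: "0 \<le> t" using i0 feas unfolding f_def I_def by auto
    define x' where "x' = (\<lambda>k. x k + t * u k)"
    have apx: "ap i x' = ap i x + t * ap i u" for i unfolding x'_def ap_lin ..
    have feas': "ap i x' \<le> b i" if "i < l" for i
    proof (cases "i \<in> I")
      case True
      then have "t * ap i u \<le> f i * ap i u" using tle[OF True] unfolding I_def by (simp add: mult_right_mono)
      also have "\<dots> = b i - ap i x" using True unfolding f_def I_def by simp
      finally show ?thesis unfolding apx by simp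
    next
      case False
      then have "ap i u \<le> 0" using that unfolding I_def by auto
      then have "t * ap i u \<le> 0" using t0 by (simp add: mult_nonneg_nonpos)
      moreover have "ap i x \<le> b i" using feas that by simp
      ultimately show ?thesis unfolding apx by linarith
    qed
    have tight0: "ap i0 x' = b i0"
    proof -
      have "ap i0 u > 0" using i0 unfolding I_def by simp
      then have "t * ap i0 u = b i0 - ap i0 x" using i0(2) unfolding f_def by (auto simp: field_simps)
      then show ?thesis unfolding apx by simp
    qed
    have i0rs: "i0 \<notin> set rs" using apr i0 apu0 unfolding I_def by force
    have tight': "\<forall>r\<in>set (i0 # rs). ap r x' = b r"
      using tight0 tight apr apu0 unfolding apx by auto
    have g'': "good (i0 # rs) cs'" using g' i0rs i0 unfolding good_def I_def by auto
    have mnz': "minor Af (i0 # rs) cs' \<noteq> 0" unfolding apv[symmetric] using apu0 i0 unfolding I_def by force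
    have "Inv b x' (i0 # rs) cs'" unfolding Inv_def using feas' g'' len' mnz' tight' by auto
    moreover have "mu x' cs' < mu x cs"
    proof -
      have "length cs' \<le> n" using g' length_le_n unfolding good_def by auto
      then have lt: "length cs < n" unfolding cs'_def by simp
      have c1: "card {k. k < n \<and> x' k \<noteq> 0 \<and> k \<notin> set cs'} \<le> n"
        using card_mono[of "{..<n}" "{k. k < n \<and> x' k \<noteq> 0 \<and> k \<notin> set cs'}"] by auto
      have "mu x' cs' \<le> (n - Suc (length cs)) * (n+1) + n" unfolding mu_def using c1 unfolding cs'_def by simp
      also have "\<dots> < (n - length cs) * (n+1)"
      proof -
        have "n - length cs = Suc (n - Suc (length cs))" using lt by simp
        then show ?thesis by simp
      qed
      also have "\<dots> \<le> mu x cs" unfolding mu_def by simp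
      finally show ?thesis .
    qed
    ultimately show ?thesis by blast
  qed
qed

lemma basic_exists:
  assumes "Inv b x0 [] []"
  shows "\<exists>x rs cs. Inv b x rs cs \<and> (\<forall>j<n. x j \<noteq> 0 \<longrightarrow> j \<in> set cs)"
proof -
  have "\<forall>x rs cs. Inv b x rs cs \<and> mu x cs = m \<longrightarrow> (\<exists>x rs cs. Inv b x rs cs \<and> (\<forall>j<n. x j \<noteq> 0 \<longrightarrow> j \<in> set cs))" for m
  proof (induction m rule: less_induct)
    case (less m)
    show ?case
    proof (intro allI impI)
      fix x rs cs assume a: "Inv b x rs cs \<and> mu x cs = m"
      show "\<exists>x rs cs. Inv b x rs cs \<and> (\<forall>j<n. x j \<noteq> 0 \<longrightarrow> j \<in> set cs)"
      proof (cases "\<forall>j<n. x j \<noteq> 0 \<longrightarrow> j \<in> set cs")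
        case True then show ?thesis using a by blast
      next
        case False
        then obtain j where "j < n" "x j \<noteq> 0" "j \<notin> set cs" by blast
        from basic_step[OF conjunct1[OF a] this] obtain x' rs' cs' where
          "Inv b x' rs' cs'" "mu x' cs' < mu x cs" by blast
        then show ?thesis using less.IH a by blast
      qed
    qed
  qed
  then show ?thesis using assms by blast
qed

end



lemma sum_over_list:
  fixes cs :: "nat list"
  assumes "distinct cs" "set cs \<subseteq> {..<n}" "\<And>j. j < n \<Longrightarrow> j \<notin> set cs \<Longrightarrow> f j = 0"
  shows "(\<Sum>j<n. f j) = (\<Sum>c<length cs. f (cs!c))"
proof -
  have "(\<Sum>j<n. f j) = (\<Sum>j\<in>set cs. f j)"
    by (rule sum.mono_neutral_right, insert assms, auto)
  also have "set cs = (nth cs) ` {..<length cs}" by (auto simp: in_set_conv_nth)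
  also have "(\<Sum>j\<in>(nth cs) ` {..<length cs}. f j) = (\<Sum>c<length cs. f (cs!c))"
    by (rule sum.reindex[unfolded o_def], rule inj_on_nth, insert assms, auto)
  finally show ?thesis .
qed

context psetup begin

definition Mm :: "nat list \<Rightarrow> nat list \<Rightarrow> rat mat" where
  "Mm rs cs = mat (length rs) (length rs) (\<lambda>(a,c). Af (rs!a) (cs!c))"

lemma det_Mm: "det (Mm rs cs) = minor Af rs cs" unfolding Mm_def minor_def by simp

lemma adj_Mm:
  assumes "length rs = length cs" "a < length rs" "c < length rs"
  shows "adj_mat (Mm rs cs) $$ (c,a) = (-1)^(a+c) * minor Af (dl a rs) (dl c cs)"
proof -
  have md: "mat_delete (Mm rs cs) a c = mat (length (dl a rs)) (length (dl a rs)) (\<lambda>(i,j). Af (dl a rs ! i) (dl c cs ! j))"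
    by (rule eq_matI, insert assms, auto simp: mat_delete_def Mm_def dl_nth length_dl)
  have dims: "dim_row (Mm rs cs) = length rs" "dim_col (Mm rs cs) = length rs" unfolding Mm_def by auto
  show ?thesis using assms by (simp add: adj_mat_def dims md cofactor_def minor_def)
qed

lemma adj_Mm_int: "adj_mat (Mm rs cs) $$ (c,a) \<in> \<int>" if "length rs = length cs" "a < length rs" "c < length rs"
  unfolding adj_Mm[OF that] using minor_Af_int by simp

lemma adj_Mm_bnd:
  assumes "good rs cs" "length rs = length cs" "a < length rs" "c < length rs"
  shows "\<bar>adj_mat (Mm rs cs) $$ (c,a)\<bar> \<le> of_int \<Delta>"
proof -
  have g: "good (dl a rs) (dl c cs)" using assms(1) set_dl[of a rs] set_dl[of c cs] distinct_dl[of rs a] distinct_dl[of cs c]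
    unfolding good_def by auto
  have "\<bar>adj_mat (Mm rs cs) $$ (c,a)\<bar> = \<bar>minor Af (dl a rs) (dl c cs)\<bar>"
    unfolding adj_Mm[OF assms(2-4)] by (simp add: abs_mult)
  also have "\<dots> \<le> of_int \<Delta>" by (rule minor_Af_bnd[OF g], insert assms, simp add: length_dl)
  finally show ?thesis .
qed

lemma solve_minor:
  assumes g: "good rs cs" and len: "length rs = length cs"
    and supp: "\<And>j. j < n \<Longrightarrow> x j \<noteq> 0 \<Longrightarrow> j \<in> set cs" and c: "c < length rs"
  shows "minor Af rs cs * x (cs!c) = (\<Sum>a<length rs. adj_mat (Mm rs cs) $$ (c,a) * ap (rs!a) x)"
proof -
  define k where "k = length rs"
  define M where "M = Mm rs cs"
  have Mc: "M \<in> carrier_mat k k" unfolding M_def Mm_def k_def by simp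
  define y where "y = vec k (\<lambda>c. x (cs!c))"
  have My: "M *\<^sub>v y = vec k (\<lambda>a. ap (rs!a) x)"
  proof (rule eq_vecI)
    fix a assume a: "a < dim_vec (vec k (\<lambda>a. ap (rs!a) x))"
    then have a: "a < k" by simp
    have "ap (rs!a) x = (\<Sum>c<length cs. Af (rs!a) (cs!c) * x (cs!c))"
      unfolding ap_def by (rule sum_over_list, insert g supp, auto simp: good_def)
    also have "\<dots> = (M *\<^sub>v y) $ a"
      using a Mc len unfolding M_def Mm_def y_def k_def
      by (auto simp: mult_mat_vec_def scalar_prod_def intro!: sum.cong)
    finally show "(M *\<^sub>v y) $ a = vec k (\<lambda>a. ap (rs!a) x) $ a" using a by simp
  qed (insert Mc, auto)
  have "adj_mat M *\<^sub>v (M *\<^sub>v y) = (adj_mat M * M) *\<^sub>v y"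
    using adj_mat(1)[OF Mc] Mc by (simp add: assoc_mult_mat_vec y_def)
  also have "\<dots> = det M \<cdot>\<^sub>v y" unfolding adj_mat(3)[OF Mc]
  proof (rule eq_vecI)
    fix i assume "i < dim_vec (det M \<cdot>\<^sub>v y)"
    then have i: "i < k" unfolding y_def by simp
    have "row (det M \<cdot>\<^sub>m 1\<^sub>m k) i = det M \<cdot>\<^sub>v unit_vec k i" using i by (simp add: row_smult)
    then show "((det M \<cdot>\<^sub>m 1\<^sub>m k) *\<^sub>v y) $ i = (det M \<cdot>\<^sub>v y) $ i"
      using i unfolding y_def by (simp add: scalar_prod_left_unit)
  qed (simp add: y_def)
  finally have eq: "adj_mat M *\<^sub>v vec k (\<lambda>a. ap (rs!a) x) = det M \<cdot>\<^sub>v y" unfolding My .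
  have "det M * x (cs!c) = (det M \<cdot>\<^sub>v y) $ c" using c unfolding y_def k_def by simp
  also have "\<dots> = (adj_mat M *\<^sub>v vec k (\<lambda>a. ap (rs!a) x)) $ c" unfolding eq ..
  also have "\<dots> = (\<Sum>a<k. adj_mat M $$ (c,a) * ap (rs!a) x)"
    using c adj_mat(1)[OF Mc] unfolding k_def
    by (auto simp: mult_mat_vec_def scalar_prod_def intro!: sum.cong)
  finally show ?thesis unfolding M_def det_Mm k_def .
qed

end


lemma sign_step:
  fixes a e t :: rat
  assumes t: "t > 0" and r: "a * e > 0 \<longrightarrow> t \<le> a / e" and nz: "e \<noteq> 0 \<longrightarrow> a \<noteq> 0"
  shows "(a - t*e > 0 \<longrightarrow> a > 0) \<and> (a - t*e < 0 \<longrightarrow> a < 0)"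
proof (cases "e = 0")
  case True then show ?thesis by simp
next
  case False
  then have a: "a \<noteq> 0" using nz by simp
  consider "a > 0" "e > 0" | "a > 0" "e < 0" | "a < 0" "e > 0" | "a < 0" "e < 0"
    using a False by linarith
  then show ?thesis
  proof cases
    case 1
    then have "t \<le> a / e" using r by simp
    then have "t * e \<le> a" using 1 by (simp add: pos_le_divide_eq)
    then show ?thesis using 1 by simp
  next
    case 2
    then have "t * e < 0" using t by (simp add: mult_pos_neg)
    then show ?thesis using 2 by simp
  next
    case 3
    then have "t * e > 0" using t by simp
    then show ?thesis using 3 by simp
  next
    case 4
    then have "a * e > 0" by (simp add: mult_neg_neg)
    then have "t \<le> a / e" using r by simp
    then have "a \<le> t * e" using 4 by (simp add: neg_le_divide_eq)
    then show ?thesis using 4 by simp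
  qed
qed

lemma sgn_agree:
  fixes a e :: rat
  assumes "e \<noteq> 0 \<longrightarrow> a \<noteq> 0" "e * a \<ge> 0"
  shows "(e > 0 \<longrightarrow> a > 0) \<and> (e < 0 \<longrightarrow> a < 0)"
  using assms by (metis linorder_neqE_linordered_idom mult_neg_neg mult_pos_neg mult_neg_pos not_less)

lemma ratio_pos: fixes a e :: rat shows "a * e > 0 \<Longrightarrow> a / e > 0"
  by (metis divide_pos_neg divide_pos_pos mult_less_0_iff nless_le not_less_iff_gr_or_eq zero_less_mult_iff divide_neg_neg)

lemma kill: fixes a e :: rat shows "e \<noteq> 0 \<Longrightarrow> a - (a / e) * e = 0" by simp

lemma keep: fixes a e t :: rat shows "a * e < 0 \<Longrightarrow> t > 0 \<Longrightarrow> a - t * e \<noteq> 0"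
proof -
  assume ae: "a * e < 0" and t: "t > 0"
  then have "(0 < a \<and> e < 0) \<or> (a < 0 \<and> 0 < e)" by (simp add: mult_less_0_iff)
  then show ?thesis
  proof
    assume h: "0 < a \<and> e < 0"
    then have "t * e < 0" using t by (simp add: mult_pos_neg)
    then show ?thesis using h by linarith
  next
    assume h: "a < 0 \<and> 0 < e"
    then have "t * e > 0" using t by simp
    then show ?thesis using h by linarith
  qed
qed



lemma minor_nil: "minor M [] [] = 1"
proof -
  have "mat 0 0 (\<lambda>(a,b). M ([]!a) ([]!b)) = 1\<^sub>m 0" by (rule eq_matI, auto)
  then show ?thesis unfolding minor_def by simp
qed

lemma max_minor_kernel:
  fixes M :: "nat \<Rightarrow> nat \<Rightarrow> rat" and R C :: "nat set"
  assumes fC: "finite C"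
  shows "\<exists>rs cs. distinct rs \<and> set rs \<subseteq> R \<and> distinct cs \<and> set cs \<subseteq> C \<and> length rs = length cs
    \<and> minor M rs cs \<noteq> 0 \<and> (\<forall>j\<in>C - set cs. \<forall>i\<in>R. minor M (i#rs) (cs@[j]) = 0)"
proof -
  define P where "P k \<longleftrightarrow> (\<exists>rs cs. distinct rs \<and> set rs \<subseteq> R \<and> distinct cs \<and> set cs \<subseteq> C
     \<and> length rs = k \<and> length cs = k \<and> minor M rs cs \<noteq> 0)" for k
  have P0: "P 0" unfolding P_def by (rule exI[of _ "[]"], rule exI[of _ "[]"], simp add: minor_nil)
  have bnd: "k \<le> card C" if "P k" for k
  proof -
    from that obtain cs where "distinct cs" "set cs \<subseteq> C" "length cs = k" unfolding P_def by auto
    then show ?thesis using card_mono[OF fC] distinct_card by metis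
  qed
  define K where "K = (GREATEST k. P k)"
  have PK: "P K" unfolding K_def by (rule GreatestI_nat[of P 0 "card C"], rule P0, rule bnd)
  have Kmax: "k \<le> K" if "P k" for k unfolding K_def by (rule Greatest_le_nat[of P k "card C"], rule that, rule bnd)
  from PK obtain rs cs where rc: "distinct rs" "set rs \<subseteq> R" "distinct cs" "set cs \<subseteq> C"
     "length rs = K" "length cs = K" "minor M rs cs \<noteq> 0" unfolding P_def by auto
  have "\<forall>j\<in>C - set cs. \<forall>i\<in>R. minor M (i#rs) (cs@[j]) = 0"
  proof (intro ballI)
    fix j i assume j: "j \<in> C - set cs" and i: "i \<in> R"
    show "minor M (i#rs) (cs@[j]) = 0"
    proof (cases "i \<in> set rs")
      case True then show ?thesis by (rule minor_rep_row, insert rc, simp)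
    next
      case False
      show ?thesis
      proof (rule ccontr)
        assume "minor M (i#rs) (cs@[j]) \<noteq> 0"
        then have "P (Suc K)" unfolding P_def using rc j i False
          by (intro exI[of _ "i#rs"] exI[of _ "cs@[j]"], auto)
        then show False using Kmax by fastforce
      qed
    qed
  qed
  then show ?thesis using rc by metis
qed

context psetup begin

definition E :: "(nat \<Rightarrow> rat) \<Rightarrow> nat \<Rightarrow> rat" where "E w c = (if c < n then w c else ap (c - n) w)"

definition conf :: "(nat \<Rightarrow> rat) \<Rightarrow> (nat \<Rightarrow> rat) \<Rightarrow> bool" where
  "conf g w \<longleftrightarrow> (\<forall>c<n+l. (E g c > 0 \<longrightarrow> E w c > 0) \<and> (E g c < 0 \<longrightarrow> E w c < 0))"

definition okv :: "(nat \<Rightarrow> rat) \<Rightarrow> bool" where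
  "okv g \<longleftrightarrow> (\<forall>j. g j \<in> \<int>) \<and> (\<forall>j. \<bar>g j\<bar> \<le> of_int \<Delta>)"

definition supp :: "(nat \<Rightarrow> rat) \<Rightarrow> nat set" where "supp w = {c. c < n+l \<and> E w c \<noteq> 0}"

lemma E_lin: "E (\<lambda>k. x k - t * y k) c = E x c - t * E y c"
proof -
  have "ap i (\<lambda>k. x k - t * y k) = ap i x - t * ap i y" for i
    using ap_lin[of i x "-t" y] by simp
  then show ?thesis unfolding E_def by simp
qed

lemma E_neg: "E (\<lambda>k. - y k) c = - E y c" unfolding E_def using ap_neg by simp

lemma E_zero: assumes "\<forall>j<n. w j = 0" shows "E w c = 0"
proof -
  have "ap i w = ap i (\<lambda>_. 0)" for i by (rule ap_cong, insert assms, auto)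
  then show ?thesis unfolding E_def ap_def using assms by auto
qed

lemma conf_trans:
  assumes "conf g w'" "\<And>c. c < n+l \<Longrightarrow> (E w' c > 0 \<longrightarrow> E w c > 0) \<and> (E w' c < 0 \<longrightarrow> E w c < 0)"
  shows "conf g w"
  using assms unfolding conf_def by blast

lemma okv_neg: "okv g \<Longrightarrow> okv (\<lambda>k. - g k)" unfolding okv_def by auto

lemma ECE:
  assumes "\<exists>j<n. w j \<noteq> 0"
  shows "\<exists>g. okv g \<and> (\<exists>j<n. g j \<noteq> 0) \<and> conf g w"
  using assms
proof (induction "card (supp w)" arbitrary: w rule: less_induct)
  case less
  define Sx where "Sx = {j. j < n \<and> w j \<noteq> 0}"
  define Z where "Z = {i. i < l \<and> ap i w = 0}"
  obtain rs cs where rc: "distinct rs" "set rs \<subseteq> Z" "distinct cs" "set cs \<subseteq> Sx" "length rs = length cs"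
    "minor Af rs cs \<noteq> 0" and mx: "\<forall>j\<in>Sx - set cs. \<forall>i\<in>Z. minor Af (i#rs) (cs@[j]) = 0"
    using max_minor_kernel[where M = Af and R = Z and C = Sx] unfolding Sx_def by auto
  have g: "good rs cs" using rc unfolding good_def Z_def Sx_def by auto
  have "\<exists>j\<in>Sx. j \<notin> set cs"
  proof (rule ccontr)
    assume "\<not> ?thesis"
    then have sub: "\<And>j. j < n \<Longrightarrow> w j \<noteq> 0 \<Longrightarrow> j \<in> set cs" unfolding Sx_def by auto
    obtain j0 where j0: "j0 < n" "w j0 \<noteq> 0" using less.prems by auto
    then obtain c where c: "c < length cs" "cs ! c = j0" using sub by (metis in_set_conv_nth)
    have "minor Af rs cs * w (cs!c) = (\<Sum>a<length rs. adj_mat (Mm rs cs) $$ (c,a) * ap (rs!a) w)"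
      by (rule solve_minor[OF g rc(5) sub], insert c rc(5), auto)
    also have "\<dots> = 0"
    proof (rule sum.neutral, intro ballI)
      fix a assume "a \<in> {..<length rs}"
      then have "rs ! a \<in> Z" using rc(2) nth_mem by blast
      then show "adj_mat (Mm rs cs) $$ (c,a) * ap (rs!a) w = 0" unfolding Z_def by simp
    qed
    finally show False using rc(6) j0 c by simp
  qed
  then obtain j where j: "j \<in> Sx" "j \<notin> set cs" by blast
  define cs' where "cs' = cs @ [j]"
  define u where "u = bvec Af rs cs'"
  have g': "good rs cs'" using g j unfolding good_def cs'_def Sx_def by auto
  have len': "length cs' = Suc (length rs)" using rc(5) cs'_def by simp
  have uj: "u j \<noteq> 0" unfolding u_def cs'_def using bvec_last[of cs j rs] g' rc(6)
    unfolding good_def cs'_def by simp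
  have jn: "j < n" using j unfolding Sx_def by simp
  have oku: "okv u" unfolding okv_def u_def using bvec_int bvec_bnd[OF g' len'] by auto
  have apu: "ap i u = minor Af (i#rs) cs'" for i unfolding u_def
    by (rule ap_bvec, insert g' len', auto simp: good_def)
  have ssub: "E w c \<noteq> 0" if "c < n+l" "E u c \<noteq> 0" for c
  proof (cases "c < n")
    case True
    then have "u c \<noteq> 0" using that unfolding E_def by simp
    then have "c \<in> set cs'" using bvec_out unfolding u_def by metis
    then have "c \<in> Sx" using rc(4) j unfolding cs'_def by auto
    then show ?thesis using True unfolding E_def Sx_def by simp
  next
    case False
    define i where "i = c - n"
    have i: "i < l" using that False unfolding i_def by simp
    have "ap i u \<noteq> 0" using that False unfolding E_def i_def by simp
    then have "ap i w \<noteq> 0" using mx j i unfolding apu cs'_def Z_def by auto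
    then show ?thesis using False unfolding E_def i_def by simp
  qed
  have ex_u: "\<exists>j<n. u j \<noteq> 0" using uj jn by blast
  show ?case
  proof (cases "\<forall>c<n+l. E u c * E w c \<ge> 0")
    case True
    have "conf u w" unfolding conf_def using sgn_agree ssub True by blast
    then show ?thesis using oku ex_u by blast
  next
    case F1: False
    show ?thesis
    proof (cases "\<forall>c<n+l. E u c * E w c \<le> 0")
      case True
      have "conf (\<lambda>k. - u k) w" unfolding conf_def
      proof (intro allI impI)
        fix c assume c: "c < n + l"
        have "E (\<lambda>k. - u k) c \<noteq> 0 \<longrightarrow> E w c \<noteq> 0" using ssub[OF c] unfolding E_neg by simp
        moreover have "E (\<lambda>k. - u k) c * E w c \<ge> 0" using True c unfolding E_neg by simp
        ultimately show "(0 < E (\<lambda>k. - u k) c \<longrightarrow> 0 < E w c) \<and> (E (\<lambda>k. - u k) c < 0 \<longrightarrow> E w c < 0)"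
          using sgn_agree by blast
      qed
      moreover have "\<exists>j<n. - u j \<noteq> 0" using ex_u by simp
      ultimately show ?thesis using okv_neg[OF oku] by blast
    next
      case F2: False
      obtain c1 where c1: "c1 < n+l" "E u c1 * E w c1 > 0" using F2 by force
      obtain c2 where c2: "c2 < n+l" "E u c2 * E w c2 < 0" using F1 by force
      define C where "C = {c. c < n+l \<and> E w c * E u c > 0}"
      define ra where "ra = (\<lambda>c. E w c / E u c)"
      define t where "t = Min (ra ` C)"
      have fC: "finite C" "C \<noteq> {}" unfolding C_def using c1 by (auto simp: mult.commute)
      have "t \<in> ra ` C" unfolding t_def using fC by (intro Min_in, auto)
      then obtain c0 where c0: "c0 \<in> C" "ra c0 = t" by auto
      have tle: "t \<le> ra c" if "c \<in> C" for c unfolding t_def using fC that by auto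
      have tpos: "t > 0" using c0 ratio_pos unfolding C_def ra_def by auto
      define w' where "w' = (\<lambda>k. w k - t * u k)"
      have Ew': "E w' c = E w c - t * E u c" for c unfolding w'_def E_lin ..
      have sgn: "(E w' c > 0 \<longrightarrow> E w c > 0) \<and> (E w' c < 0 \<longrightarrow> E w c < 0)" if c: "c < n+l" for c
        unfolding Ew' by (rule sign_step[OF tpos], insert tle c ssub[OF c], auto simp: C_def ra_def)
      have z0: "E w' c0 = 0" using c0 unfolding Ew' C_def ra_def by auto
      have nz2: "E w' c2 \<noteq> 0"
      proof -
        have "E w c2 * E u c2 < 0" using c2 by (simp add: mult.commute)
        then show ?thesis unfolding Ew' using keep[OF _ tpos] by blast
      qed
      have "supp w' \<subset> supp w"
      proof
        show "supp w' \<subseteq> supp w" unfolding supp_def using sgn by force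
        show "supp w' \<noteq> supp w" using z0 c0 unfolding supp_def C_def by force
      qed
      then have lt: "card (supp w') < card (supp w)" by (rule psubset_card_mono[rotated], simp add: supp_def)
      have exw': "\<exists>j<n. w' j \<noteq> 0" using E_zero nz2 by blast
      obtain gg where gg: "okv gg" "\<exists>j<n. gg j \<noteq> 0" "conf gg w'" using less.hyps[OF lt exw'] by blast
      have "conf gg w" by (rule conf_trans[OF gg(3) sgn])
      then show ?thesis using gg by blast
    qed
  qed
qed

lemma DEC:
  "\<exists>(N::nat) lam G. (\<forall>k<N. lam k \<ge> 0 \<and> okv (G k) \<and> conf (G k) w) \<and> (\<forall>j<n. w j = (\<Sum>k<N. lam k * G k j))"
proof (induction "card (supp w)" arbitrary: w rule: less_induct)
  case less
  show ?case
  proof (cases "\<forall>j<n. w j = 0")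
    case True
    have "(\<forall>k<(0::nat). (0::rat) \<le> 0 \<and> okv (\<lambda>_. 0) \<and> conf (\<lambda>_. 0) w) \<and> (\<forall>j<n. w j = (\<Sum>k<(0::nat). (0::rat) * 0))"
      using True by simp
    then show ?thesis by (intro exI[of _ "0::nat"] exI[of _ "\<lambda>_::nat. 0::rat"] exI[of _ "\<lambda>(_::nat) (_::nat). 0::rat"], simp)
  next
    case False
    then obtain g where g: "okv g" "\<exists>j<n. g j \<noteq> 0" "conf g w" using ECE by blast
    obtain j1 where j1: "j1 < n" "g j1 \<noteq> 0" using g(2) by blast
    define C where "C = {c. c < n+l \<and> E g c \<noteq> 0}"
    define ra where "ra = (\<lambda>c. E w c / E g c)"
    define t where "t = Min (ra ` C)"
    have prod: "E w c * E g c > 0" if "c \<in> C" for c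
    proof -
      have "c < n+l" "E g c \<noteq> 0" using that unfolding C_def by auto
      then show ?thesis using g(3) unfolding conf_def
        by (metis linorder_neqE_linordered_idom mult_neg_neg mult_pos_pos)
    qed
    have fC: "finite C" "C \<noteq> {}" unfolding C_def using j1 by (auto simp: E_def intro!: exI[of _ j1])
    have "t \<in> ra ` C" unfolding t_def using fC by (intro Min_in, auto)
    then obtain c0 where c0: "c0 \<in> C" "ra c0 = t" by auto
    have tle: "t \<le> ra c" if "c \<in> C" for c unfolding t_def using fC that by auto
    have tpos: "t > 0" using c0 ratio_pos prod unfolding ra_def by auto
    define w' where "w' = (\<lambda>k. w k - t * g k)"
    have Ew': "E w' c = E w c - t * E g c" for c unfolding w'_def E_lin ..
    have sgn: "(E w' c > 0 \<longrightarrow> E w c > 0) \<and> (E w' c < 0 \<longrightarrow> E w c < 0)" if c: "c < n+l" for c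
    proof -
      have nz: "E g c \<noteq> 0 \<longrightarrow> E w c \<noteq> 0" using prod c unfolding C_def by force
      have r: "E w c * E g c > 0 \<longrightarrow> t \<le> E w c / E g c" using tle c unfolding C_def ra_def by force
      show ?thesis unfolding Ew' by (rule sign_step[OF tpos r nz])
    qed
    have z0: "E w' c0 = 0" using c0 unfolding Ew' C_def ra_def by auto
    have "supp w' \<subset> supp w"
    proof
      show "supp w' \<subseteq> supp w" unfolding supp_def using sgn by force
      show "supp w' \<noteq> supp w" using z0 c0 prod[OF c0(1)] unfolding supp_def C_def by force
    qed
    then have lt: "card (supp w') < card (supp w)" by (rule psubset_card_mono[rotated], simp add: supp_def)
    obtain N :: nat and lam G where IH: "\<forall>k<N. lam k \<ge> 0 \<and> okv (G k) \<and> conf (G k) w'" "\<forall>j<n. w' j = (\<Sum>k<N. lam k * G k j)"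
      using less.hyps[OF lt] by blast
    define lam2 where "lam2 = lam(N := t)"
    define G2 where "G2 = G(N := g)"
    have "\<forall>k<Suc N. lam2 k \<ge> 0 \<and> okv (G2 k) \<and> conf (G2 k) w"
    proof (intro allI impI)
      fix k assume k: "k < Suc N"
      show "lam2 k \<ge> 0 \<and> okv (G2 k) \<and> conf (G2 k) w"
      proof (cases "k = N")
        case True then show ?thesis using g tpos unfolding lam2_def G2_def by simp
      next
        case False
        then have "k < N" using k by simp
        then show ?thesis using IH(1) conf_trans sgn False unfolding lam2_def G2_def by auto
      qed
    qed
    moreover have "\<forall>j<n. w j = (\<Sum>k<Suc N. lam2 k * G2 k j)"
    proof (intro allI impI)
      fix j assume j: "j < n"
      have "(\<Sum>k<Suc N. lam2 k * G2 k j) = (\<Sum>k<N. lam k * G k j) + t * g j"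
        unfolding lam2_def G2_def by (simp add: lessThan_Suc)
      also have "\<dots> = w j"
      proof -
        have "w j - t * g j = (\<Sum>k<N. lam k * G k j)" using IH(2) j unfolding w'_def by simp
        then show ?thesis by simp
      qed
      finally show "w j = (\<Sum>k<Suc N. lam2 k * G2 k j)" by simp
    qed
    ultimately show ?thesis by blast
  qed
qed

end



lemma bvec_last_gen:
  assumes "distinct (cs @ [j])"
  shows "bvec M rs (cs @ [j]) j = (-1)^(length cs) * minor M rs cs"
  using bvec_nth[OF assms, of "length cs" M rs] by (simp add: dl_snoc)

lemma dep:
  fixes V :: "nat \<Rightarrow> nat \<Rightarrow> rat"
  assumes nN: "n < N"
  shows "\<exists>\<mu>. (\<exists>k<N. \<mu> k \<noteq> 0) \<and> (\<forall>j<n. (\<Sum>k<N. V j k * \<mu> k) = 0)"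
proof -
  obtain rs cs where rc: "distinct rs" "set rs \<subseteq> {..<n}" "distinct cs" "set cs \<subseteq> {..<N}" "length rs = length cs"
    "minor V rs cs \<noteq> 0" and mx: "\<forall>j\<in>{..<N} - set cs. \<forall>i\<in>{..<n}. minor V (i#rs) (cs@[j]) = 0"
    using max_minor_kernel[where M = V and R = "{..<n}" and C = "{..<N}"] by auto
  have "length rs \<le> n" using card_mono[OF _ rc(2)] distinct_card[OF rc(1)] by simp
  then have lc: "length cs < N" using rc(5) nN by simp
  have "\<exists>c<N. c \<notin> set cs"
  proof (rule ccontr)
    assume "\<not> ?thesis"
    then have "{..<N} \<subseteq> set cs" by auto
    then have "N \<le> card (set cs)" using card_mono[of "set cs" "{..<N}"] by simp
    then show False using distinct_card[OF rc(3)] lc by simp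
  qed
  then obtain c where c: "c < N" "c \<notin> set cs" by blast
  define \<mu> where "\<mu> = bvec V rs (cs @ [c])"
  have "\<mu> c \<noteq> 0" unfolding \<mu>_def using bvec_last_gen[of cs c V rs] rc c by simp
  moreover have "(\<Sum>k<N. V j k * \<mu> k) = 0" if j: "j < n" for j
  proof -
    have "(\<Sum>k<N. V j k * \<mu> k) = minor V (j#rs) (cs@[c])" unfolding \<mu>_def
      by (rule bvec_row, insert rc c, auto)
    also have "\<dots> = 0" using mx c j by auto
    finally show ?thesis .
  qed
  ultimately show ?thesis using c by blast
qed

lemma CR:
  fixes G :: "nat \<Rightarrow> nat \<Rightarrow> rat" and Q :: "(nat \<Rightarrow> rat) \<Rightarrow> bool"
  assumes "\<forall>k<N. lam k \<ge> 0 \<and> Q (G k)" "\<forall>j<n. w j = (\<Sum>k<N. lam k * G k j)"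
  shows "\<exists>(N'::nat) lam' G'. N' \<le> n \<and> (\<forall>k<N'. lam' k \<ge> 0 \<and> Q (G' k)) \<and> (\<forall>j<n. w j = (\<Sum>k<N'. lam' k * G' k j))"
  using assms
proof (induction N arbitrary: lam G rule: less_induct)
  case (less N)
  show ?case
  proof (cases "N \<le> n")
    case True then show ?thesis using less.prems by blast
  next
    case False
    then have nN: "n < N" by simp
    obtain \<mu> where mu: "\<exists>k<N. \<mu> k \<noteq> 0" "\<forall>j<n. (\<Sum>k<N. G k j * \<mu> k) = 0"
      using dep[OF nN, of "\<lambda>j k. G k j"] by blast
    define \<nu> where "\<nu> = (if \<exists>k<N. \<mu> k > 0 then \<mu> else (\<lambda>k. - \<mu> k))"
    have nu0: "(\<Sum>k<N. G k j * \<nu> k) = 0" if "j < n" for j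
      using mu(2) that unfolding \<nu>_def by (auto simp: sum_negf)
    have nupos: "\<exists>k<N. \<nu> k > 0"
    proof (cases "\<exists>k<N. \<mu> k > 0")
      case True then show ?thesis unfolding \<nu>_def by simp
    next
      case False
      then obtain k where "k < N" "\<mu> k < 0" using mu(1) by force
      then show ?thesis unfolding \<nu>_def using False by auto
    qed
    define K where "K = {k. k < N \<and> \<nu> k > 0}"
    define s where "s = Min ((\<lambda>k. lam k / \<nu> k) ` K)"
    have fK: "finite K" "K \<noteq> {}" unfolding K_def using nupos by auto
    have "s \<in> (\<lambda>k. lam k / \<nu> k) ` K" unfolding s_def using fK by (intro Min_in, auto)
    then obtain k0 where k0: "k0 \<in> K" "lam k0 / \<nu> k0 = s" by auto
    have sle: "s \<le> lam k / \<nu> k" if "k \<in> K" for k unfolding s_def using fK that by auto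
    have s0: "s \<ge> 0" using k0 less.prems(1) unfolding K_def by auto
    define lam2 where "lam2 = (\<lambda>k. lam k - s * \<nu> k)"
    have lam2: "lam2 k \<ge> 0" if "k < N" for k
    proof (cases "k \<in> K")
      case True
      then have "s * \<nu> k \<le> lam k" using sle[OF True] unfolding K_def by (simp add: pos_le_divide_eq)
      then show ?thesis unfolding lam2_def by simp
    next
      case False
      then have "\<nu> k \<le> 0" using that unfolding K_def by auto
      then have "s * \<nu> k \<le> 0" using s0 by (simp add: mult_nonneg_nonpos)
      then show ?thesis using less.prems(1) that unfolding lam2_def by force
    qed
    have lk0: "lam2 k0 = 0" using k0 unfolding lam2_def K_def by auto
    have k0N: "k0 < N" using k0 unfolding K_def by simp
    have sum2: "w j = (\<Sum>k<N. lam2 k * G k j)" if "j < n" for j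
    proof -
      have "(\<Sum>k<N. lam2 k * G k j) = (\<Sum>k<N. lam k * G k j) - s * (\<Sum>k<N. G k j * \<nu> k)"
        unfolding lam2_def by (simp add: algebra_simps sum_subtractf sum_distrib_left)
      then show ?thesis using nu0[OF that] less.prems(2) that by simp
    qed
    define p where "p = (\<lambda>k. if k = k0 then N - 1 else k)"
    have inj: "inj_on p {..<N-1}" unfolding p_def inj_on_def using k0N by auto
    have img: "p ` {..<N-1} = {..<N} - {k0}"
    proof
      show "p ` {..<N-1} \<subseteq> {..<N} - {k0}" unfolding p_def using k0N by auto
      show "{..<N} - {k0} \<subseteq> p ` {..<N-1}"
      proof
        fix k assume k: "k \<in> {..<N} - {k0}"
        show "k \<in> p ` {..<N-1}"
        proof (cases "k = N - 1")
          case True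
          then have "p k0 = k" unfolding p_def by simp
          moreover have "k0 < N - 1" using k0N k True by auto
          ultimately show ?thesis by force
        next
          case False
          then have "p k = k" "k < N - 1" using k unfolding p_def by auto
          then show ?thesis by force
        qed
      qed
    qed
    have sum3: "(\<Sum>k<N. f k) = (\<Sum>k<N-1. f (p k))" if f0: "f k0 = 0" for f :: "nat \<Rightarrow> rat"
    proof -
      have "(\<Sum>k<N. f k) = (\<Sum>k\<in>{..<N} - {k0}. f k)"
        using f0 k0N by (subst sum.remove[of _ k0], auto)
      also have "\<dots> = (\<Sum>k<N-1. f (p k))"
        unfolding img[symmetric] by (subst sum.reindex[OF inj], simp)
      finally show ?thesis .
    qed
    have "\<exists>(N'::nat) lam' G'. N' \<le> n \<and> (\<forall>k<N'. lam' k \<ge> 0 \<and> Q (G' k)) \<and> (\<forall>j<n. w j = (\<Sum>k<N'. lam' k * G' k j))"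
    proof (rule less.IH[of "N - 1" "\<lambda>k. lam2 (p k)" "\<lambda>k. G (p k)"])
      show "N - 1 < N" using k0N by simp
      show "\<forall>k<N - 1. 0 \<le> lam2 (p k) \<and> Q (G (p k))"
      proof (intro allI impI)
        fix k assume k: "k < N - 1"
        then have "p k < N" unfolding p_def using k0N by auto
        then show "0 \<le> lam2 (p k) \<and> Q (G (p k))" using lam2 less.prems(1) by auto
      qed
      show "\<forall>j<n. w j = (\<Sum>k<N - 1. lam2 (p k) * G (p k) j)"
        using sum2 sum3[of "\<lambda>k. lam2 k * G k j" for j] lk0 by auto
    qed
    then show ?thesis .
  qed
qed

lemma abs_diff_same:
  fixes a b :: rat
  assumes "a * b \<ge> 0" "\<bar>a\<bar> \<le> \<bar>b\<bar>"
  shows "\<bar>b - a\<bar> = \<bar>b\<bar> - \<bar>a\<bar>"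
proof (cases "b > 0")
  case True
  have "a \<ge> 0"
  proof (rule ccontr)
    assume "\<not> a \<ge> 0" then have "a * b < 0" using True by (simp add: mult_neg_pos)
    then show False using assms(1) by simp
  qed
  then show ?thesis using True assms(2) by simp
next
  case False
  show ?thesis
  proof (cases "b < 0")
    case True
    have "a \<le> 0"
    proof (rule ccontr)
      assume "\<not> a \<le> 0" then have "a * b < 0" using True by (simp add: mult_pos_neg)
      then show False using assms(1) by simp
    qed
    then show ?thesis using True assms(2) by simp
  next
    case False2: False
    then have "b = 0" using False by simp
    then show ?thesis using assms(2) by simp
  qed
qed

context psetup begin

lemma E_sum:
  assumes "\<forall>j<n. w j = (\<Sum>k<N. lam k * G k j)" "c < n + l"
  shows "E w c = (\<Sum>k<N. lam k * E (G k) c)"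
proof (cases "c < n")
  case True then show ?thesis using assms unfolding E_def by simp
next
  case False
  define i where "i = c - n"
  have "ap i w = ap i (\<lambda>j. \<Sum>k<N. lam k * G k j)" by (rule ap_cong, insert assms(1), auto)
  also have "\<dots> = (\<Sum>k<N. lam k * ap i (G k))"
    unfolding ap_def by (simp add: sum_distrib_left algebra_simps sum.swap[of _ "{..<n}"])
  finally show ?thesis using False unfolding E_def i_def by simp
qed

lemma abs_sum_conf:
  fixes x :: "nat \<Rightarrow> rat"
  assumes "\<forall>k<N. lam k \<ge> 0" "\<forall>k<N. (x k > 0 \<longrightarrow> a > 0) \<and> (x k < 0 \<longrightarrow> a < 0)" "a = (\<Sum>k<N. lam k * x k)"
  shows "\<bar>a\<bar> = (\<Sum>k<N. lam k * \<bar>x k\<bar>)"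
proof (cases "a \<ge> 0")
  case True
  then have "\<forall>k<N. x k \<ge> 0" using assms(2) by force
  then have "(\<Sum>k<N. lam k * \<bar>x k\<bar>) = (\<Sum>k<N. lam k * x k)" by (intro sum.cong) auto
  then show ?thesis using True assms(3) by simp
next
  case False
  then have "\<forall>k<N. x k \<le> 0" using assms(2) by force
  then have "(\<Sum>k<N. lam k * \<bar>x k\<bar>) = (\<Sum>k<N. - (lam k * x k))" by (intro sum.cong) auto
  then have "(\<Sum>k<N. lam k * \<bar>x k\<bar>) = - a" using assms(3) by (simp add: sum_negf)
  then show ?thesis using False by simp
qed

lemma KL:
  assumes j0: "j0 < n" and big: "\<bar>w j0\<bar> > of_nat n * of_int \<Delta>"
  shows "\<exists>g. okv g \<and> (\<exists>j<n. g j \<noteq> 0) \<and> (\<forall>c<n+l. E g c * E w c \<ge> 0 \<and> \<bar>E g c\<bar> \<le> \<bar>E w c\<bar>)"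
proof -
  obtain N :: nat and lam G where d: "\<forall>k<N. lam k \<ge> 0 \<and> okv (G k) \<and> conf (G k) w" "\<forall>j<n. w j = (\<Sum>k<N. lam k * G k j)"
    using DEC by blast
  obtain N' :: nat and lam' G' where d': "N' \<le> n" "\<forall>k<N'. lam' k \<ge> 0 \<and> okv (G' k) \<and> conf (G' k) w"
    "\<forall>j<n. w j = (\<Sum>k<N'. lam' k * G' k j)"
    using CR[where Q = "\<lambda>g. okv g \<and> conf g w", OF _ d(2)] d(1) by blast
  have absE: "\<bar>E w c\<bar> = (\<Sum>k<N'. lam' k * \<bar>E (G' k) c\<bar>)" if c: "c < n+l" for c
  proof -
    have "\<forall>k<N'. (E (G' k) c > 0 \<longrightarrow> E w c > 0) \<and> (E (G' k) c < 0 \<longrightarrow> E w c < 0)"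
      using d'(2) c unfolding conf_def by blast
    moreover have "\<forall>k<N'. lam' k \<ge> 0" using d'(2) by blast
    ultimately show ?thesis by (intro abs_sum_conf[OF _ _ E_sum[OF d'(3) c]]) blast+
  qed
  have "\<exists>k<N'. lam' k * \<bar>G' k j0\<bar> > of_int \<Delta>"
  proof (rule ccontr)
    assume "\<not> ?thesis"
    then have "\<forall>k<N'. lam' k * \<bar>G' k j0\<bar> \<le> of_int \<Delta>" by auto
    then have "(\<Sum>k<N'. lam' k * \<bar>G' k j0\<bar>) \<le> of_nat N' * of_int \<Delta>"
      using sum_bounded_above[of "{..<N'}" "\<lambda>k. lam' k * \<bar>G' k j0\<bar>" "of_int \<Delta>"] by simp
    also have "\<dots> \<le> of_nat n * of_int \<Delta>" using d'(1) Delta1 by (simp add: mult_right_mono)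
    finally have "\<bar>w j0\<bar> \<le> of_nat n * of_int \<Delta>" using absE[of j0] j0 unfolding E_def by simp
    then show False using big by simp
  qed
  then obtain k where k: "k < N'" "lam' k * \<bar>G' k j0\<bar> > of_int \<Delta>" by blast
  define g where "g = G' k"
  have okg: "okv g" "conf g w" and lk: "lam' k \<ge> 0" using d'(2) k unfolding g_def by auto
  have gb: "\<bar>g j0\<bar> \<le> of_int \<Delta>" using okg unfolding okv_def by simp
  have gnz: "g j0 \<noteq> 0" using k Delta1 unfolding g_def by auto
  have l1: "lam' k \<ge> 1"
  proof (rule ccontr)
    assume "\<not> ?thesis"
    then have "lam' k \<le> 1" by simp
    then have "lam' k * \<bar>g j0\<bar> \<le> 1 * \<bar>g j0\<bar>" by (intro mult_right_mono) auto
    then show False using k gb unfolding g_def by simp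
  qed
  have "\<forall>c<n+l. E g c * E w c \<ge> 0 \<and> \<bar>E g c\<bar> \<le> \<bar>E w c\<bar>"
  proof (intro allI impI conjI)
    fix c assume c: "c < n+l"
    have "(E g c > 0 \<longrightarrow> E w c > 0) \<and> (E g c < 0 \<longrightarrow> E w c < 0)" using okg(2) c unfolding conf_def by blast
    then show "E g c * E w c \<ge> 0"
      by (cases "E g c > 0"; cases "E g c < 0") (auto intro: mult_neg_neg mult_pos_pos less_imp_le)
    have "1 * \<bar>E g c\<bar> \<le> lam' k * \<bar>E g c\<bar>" using l1 by (intro mult_right_mono) auto
    then have "\<bar>E g c\<bar> \<le> lam' k * \<bar>E g c\<bar>" by simp
    also have "\<dots> \<le> (\<Sum>k<N'. lam' k * \<bar>E (G' k) c\<bar>)"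
      unfolding g_def by (rule member_le_sum, insert k d'(2), auto)
    also have "\<dots> = \<bar>E w c\<bar>" using absE[OF c] by simp
    finally show "\<bar>E g c\<bar> \<le> \<bar>E w c\<bar>" .
  qed
  then show ?thesis using okg gnz j0 by blast
qed

end



context psetup begin

lemma neg_prod: fixes x y :: rat shows "x < 0 \<Longrightarrow> x * y \<ge> 0 \<Longrightarrow> y \<le> 0"
  by (metis mult_neg_pos not_le)

lemma proximity:
  fixes b xs z0 :: "nat \<Rightarrow> rat" and Qd :: int
  assumes Qd: "Qd > 0" and xsQ: "\<forall>j<n. of_int Qd * xs j \<in> \<int>"
    and xsf: "\<forall>i<l. ap i xs \<le> b i"
    and z0: "\<forall>j<n. z0 j \<in> \<int>" "\<forall>i<l. ap i z0 \<le> b i"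
  shows "\<exists>z. (\<forall>j<n. z j \<in> \<int>) \<and> (\<forall>i<l. ap i z \<le> b i) \<and> (\<forall>j<n. \<bar>z j - xs j\<bar> \<le> of_nat n * of_int \<Delta>)"
proof -
  define FI where "FI z \<longleftrightarrow> (\<forall>j<n. z j \<in> \<int>) \<and> (\<forall>i<l. ap i z \<le> b i)" for z
  define F where "F z = (\<Sum>j<n. \<bar>of_int Qd * (z j - xs j)\<bar>)" for z
  define m where "m z = nat \<lfloor>F z\<rfloor>" for z
  have Fint: "F z \<in> \<int>" if "FI z" for z
  proof -
    have "\<bar>of_int Qd * (z j - xs j)\<bar> \<in> \<int>" if j: "j < n" for j
    proof -
      have "of_int Qd * z j \<in> \<int>" using \<open>FI z\<close> j unfolding FI_def by auto
      then have "of_int Qd * z j - of_int Qd * xs j \<in> \<int>" using xsQ j by auto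
      then show ?thesis by (simp add: right_diff_distrib)
    qed
    then show ?thesis unfolding F_def by (intro Ints_sum) auto
  qed
  have F0: "F z \<ge> 0" for z unfolding F_def by (intro sum_nonneg) auto
  have FI0: "FI z0" unfolding FI_def using z0 by auto
  obtain z where z: "FI z" and zmin: "\<And>y. FI y \<Longrightarrow> m z \<le> m y"
    using ex_has_least_nat[of FI z0 m] FI0 by blast
  have "\<forall>j<n. \<bar>z j - xs j\<bar> \<le> of_nat n * of_int \<Delta>"
  proof (rule ccontr)
    assume "\<not> ?thesis"
    then obtain j0 where j0: "j0 < n" "\<bar>z j0 - xs j0\<bar> > of_nat n * of_int \<Delta>" by force
    define w where "w = (\<lambda>j. z j - xs j)"
    obtain g where g: "okv g" "\<exists>j<n. g j \<noteq> 0" "\<forall>c<n+l. E g c * E w c \<ge> 0 \<and> \<bar>E g c\<bar> \<le> \<bar>E w c\<bar>"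
      using KL[of j0 w] j0 unfolding w_def by auto
    define z' where "z' = (\<lambda>j. z j - g j)"
    have gc: "g j * w j \<ge> 0 \<and> \<bar>g j\<bar> \<le> \<bar>w j\<bar>" if "j < n" for j
      using g(3) that unfolding E_def by (metis trans_less_add1)
    have gr: "ap i g * ap i w \<ge> 0 \<and> \<bar>ap i g\<bar> \<le> \<bar>ap i w\<bar>" if "i < l" for i
      using g(3)[rule_format, of "n+i"] that unfolding E_def by simp
    have FIz': "FI z'"
      unfolding FI_def
    proof (intro conjI allI impI)
      fix j assume "j < n"
      then show "z' j \<in> \<int>" using z g(1) unfolding FI_def okv_def z'_def by auto
    next
      fix i assume i: "i < l"
      have apz': "ap i z' = ap i z - ap i g" unfolding z'_def ap_diff ..
      have apw: "ap i w = ap i z - ap i xs" unfolding w_def ap_diff ..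
      have bz: "ap i z \<le> b i" "ap i xs \<le> b i" using z xsf i unfolding FI_def by auto
      show "ap i z' \<le> b i"
      proof (cases "ap i g \<ge> 0")
        case True then show ?thesis using apz' bz by simp
      next
        case False
        then have "ap i g < 0" by simp
        then have "ap i w \<le> 0" using neg_prod[of "ap i g" "ap i w"] gr[OF i] by blast
        then have "ap i w \<le> ap i g" using gr[OF i] False by simp
        then show ?thesis using apz' apw bz by simp
      qed
    qed
    have "F z' = F z - of_int Qd * (\<Sum>j<n. \<bar>g j\<bar>)"
    proof -
      have "\<bar>of_int Qd * (z' j - xs j)\<bar> = \<bar>of_int Qd * (z j - xs j)\<bar> - of_int Qd * \<bar>g j\<bar>" if j: "j < n" for j
      proof -
        have "z' j - xs j = w j - g j" unfolding z'_def w_def by simp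
        then have "\<bar>z' j - xs j\<bar> = \<bar>w j\<bar> - \<bar>g j\<bar>" using abs_diff_same gc[OF j] by simp
        moreover have "\<bar>of_int Qd * (z' j - xs j)\<bar> = of_int Qd * \<bar>z' j - xs j\<bar>" "\<bar>of_int Qd * (z j - xs j)\<bar> = of_int Qd * \<bar>z j - xs j\<bar>"
          using Qd by (simp_all add: abs_mult)
        ultimately show ?thesis unfolding w_def by (simp add: right_diff_distrib)
      qed
      then show ?thesis unfolding F_def by (simp add: sum_subtractf sum_distrib_left)
    qed
    moreover have "(\<Sum>j<n. \<bar>g j\<bar>) > 0"
    proof -
      obtain j1 where "j1 < n" "g j1 \<noteq> 0" using g(2) by blast
      then show ?thesis by (intro sum_pos2[of _ j1]) auto
    qed
    ultimately have lt: "F z' < F z" using Qd by simp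
    have "m z' < m z"
    proof -
      obtain a where a: "F z = of_int a" using Fint[OF z] Ints_cases by blast
      obtain a' where a': "F z' = of_int a'" using Fint[OF FIz'] Ints_cases by blast
      have "a' < a" "0 \<le> a'" using lt F0[of z'] a a' by auto
      then show ?thesis unfolding m_def a a' by simp
    qed
    then show False using zmin[OF FIz'] by simp
  qed
  then show ?thesis using z unfolding FI_def by blast
qed

end



definition idx :: "nat list \<Rightarrow> nat \<Rightarrow> nat" where "idx xs j = (THE c. c < length xs \<and> xs ! c = j)"

lemma idx_nth: assumes "distinct xs" "c < length xs" shows "idx xs (xs ! c) = c"
  unfolding idx_def
  by (rule the_equality, insert assms, auto simp: nth_eq_iff_index_eq)

lemma idx_in: assumes "distinct xs" "j \<in> set xs" shows "idx xs j < length xs" "xs ! idx xs j = j"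
proof -
  obtain c where c: "c < length xs" "xs ! c = j" using assms(2) by (metis in_set_conv_nth)
  then show "idx xs j < length xs" "xs ! idx xs j = j" using idx_nth[OF assms(1) c(1)] by auto
qed

lemma mv_ap_rat:
  assumes A: "A \<in> carrier_mat l n" and i: "i < l" and y: "y \<in> carrier_vec n"
  shows "(map_mat rat_of_int A *\<^sub>v y) $ i = (\<Sum>j<n. rat_of_int (A $$ (i,j)) * y $ j)"
  using A i y by (auto simp: mult_mat_vec_def scalar_prod_def atLeast0LessThan intro!: sum.cong)

lemma mv_int:
  assumes A: "A \<in> carrier_mat l n" and i: "i < l" and y: "y \<in> carrier_vec n"
  shows "rat_of_int ((A *\<^sub>v y) $ i) = (\<Sum>j<n. rat_of_int (A $$ (i,j)) * rat_of_int (y $ j))"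
  using A i y by (auto simp: mult_mat_vec_def scalar_prod_def atLeast0LessThan intro!: sum.cong)

theorem proposition4p1:
  fixes A :: "int mat" and b :: "int vec" and l n :: nat and \<Delta> :: int
  assumes A: "A \<in> carrier_mat l n"
    and b: "b \<in> carrier_vec l"
    and Delta: "subdet_bound A \<Delta>"
    and sol: "\<exists>x \<in> carrier_vec n. \<forall>i < l. (A *\<^sub>v x) $ i \<le> b $ i"
  shows "\<exists>D d. D \<in> carrier_mat n l \<and> d \<in> carrier_vec n
     \<and> frac_norm_mat_le D \<Delta> \<and> frac_norm_vec_le d (int n * \<Delta>\<^sup>2)
     \<and> (\<forall>j < n. (D *\<^sub>v map_vec rat_of_int b + d) $ j \<in> \<int>)
     \<and> (\<forall>i < l. (map_mat rat_of_int A *\<^sub>v (D *\<^sub>v map_vec rat_of_int b + d)) $ i \<le> rat_of_int (b $ i))"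
proof -
  interpret psetup A l n \<Delta> by (unfold_locales, rule A, rule Delta)
  obtain x0 where x0: "x0 \<in> carrier_vec n" "\<forall>i<l. (A *\<^sub>v x0) $ i \<le> b $ i" using sol by blast
  define bq where "bq i = rat_of_int (b $ i)" for i
  define z0 where "z0 j = rat_of_int (x0 $ j)" for j
  define bv where "bv = map_vec rat_of_int b"
  have apz0: "ap i z0 \<le> bq i" if "i < l" for i
  proof -
    have "ap i z0 = rat_of_int ((A *\<^sub>v x0) $ i)" unfolding ap_def Af_def z0_def using mv_int[OF A that x0(1)] by simp
    then show ?thesis using x0(2) that unfolding bq_def by simp
  qed
  have Inv0: "Inv bq z0 [] []" unfolding Inv_def good_def using apz0 by (simp add: minor_nil)
  obtain x rs cs where xI: "Inv bq x rs cs" and xs: "\<forall>j<n. x j \<noteq> 0 \<longrightarrow> j \<in> set cs"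
    using basic_exists[OF Inv0] by blast
  from xI have feas: "\<forall>i<l. ap i x \<le> bq i" and g: "good rs cs" and len: "length rs = length cs"
    and mnz: "minor Af rs cs \<noteq> 0" and tight: "\<forall>r\<in>set rs. ap r x = bq r" unfolding Inv_def by auto
  define k where "k = length rs"
  define qi where "qi = minor (\<lambda>i j. A $$ (i,j)) rs cs"
  define q where "q = minor Af rs cs"
  have qq: "q = rat_of_int qi" unfolding q_def qi_def minor_Af ..
  have qi0: "qi \<noteq> 0" using mnz qq unfolding q_def by simp
  have qib: "\<bar>qi\<bar> \<le> \<Delta>" unfolding qi_def by (rule minor_bound[OF A Delta], insert g len, auto simp: good_def)
  define adjv where "adjv c a = adj_mat (Mm rs cs) $$ (c,a)" for c a
  have adj_int: "adjv c a \<in> \<int>" if "c < k" "a < k" for c a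
    unfolding adjv_def by (rule adj_Mm_int, insert that len k_def, auto)
  have adj_bnd: "\<bar>adjv c a\<bar> \<le> of_int \<Delta>" if "c < k" "a < k" for c a
    unfolding adjv_def by (rule adj_Mm_bnd[OF g len], insert that k_def, auto)
  have xsol: "q * x (cs!c) = (\<Sum>a<k. adjv c a * bq (rs!a))" if c: "c < k" for c
  proof -
    have "q * x (cs!c) = (\<Sum>a<k. adjv c a * ap (rs!a) x)"
      unfolding q_def adjv_def k_def by (rule solve_minor[OF g len], insert xs c k_def, auto)
    also have "\<dots> = (\<Sum>a<k. adjv c a * bq (rs!a))"
      using tight k_def by (intro sum.cong refl, auto)
    finally show ?thesis .
  qed
  have rsd: "distinct rs" "set rs \<subseteq> {..<l}" and csd: "distinct cs" "set cs \<subseteq> {..<n}" using g unfolding good_def by auto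
  define D where "D = mat n l (\<lambda>(j,i). if j \<in> set cs \<and> i \<in> set rs then adjv (idx cs j) (idx rs i) / q else 0)"
  have Dc: "D \<in> carrier_mat n l" unfolding D_def by simp
  have bv: "bv \<in> carrier_vec l" unfolding bv_def using b by simp
  have Dx: "(D *\<^sub>v bv) $ j = x j" if j: "j < n" for j
  proof -
    have "(D *\<^sub>v bv) $ j = (\<Sum>i<l. D $$ (j,i) * bq i)"
      using Dc bv j b unfolding bv_def bq_def by (auto simp: mult_mat_vec_def scalar_prod_def atLeast0LessThan intro!: sum.cong)
    also have "\<dots> = x j"
    proof (cases "j \<in> set cs")
      case True
      define c where "c = idx cs j"
      have c: "c < k" "cs ! c = j" using idx_in[OF csd(1) True] len k_def c_def by auto
      have "(\<Sum>i<l. D $$ (j,i) * bq i) = (\<Sum>a<length rs. D $$ (j, rs!a) * bq (rs!a))"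
        by (rule sum_over_list[OF rsd], insert j True, auto simp: D_def)
      also have "\<dots> = (\<Sum>a<length rs. adjv c a / q * bq (rs!a))"
      proof (intro sum.cong refl)
        fix a assume a: "a \<in> {..<length rs}"
        then have ra: "rs ! a \<in> set rs" by simp
        have ral: "rs ! a < l" using rsd ra by auto
        show "D $$ (j, rs!a) * bq (rs!a) = adjv c a / q * bq (rs!a)"
          using j True a ra ral idx_nth[OF rsd(1)] unfolding D_def c_def k_def by auto
      qed
      also have "\<dots> = (\<Sum>a<k. adjv c a * bq (rs!a)) / q" unfolding k_def by (simp add: sum_divide_distrib)
      also have "\<dots> = x j"
      proof -
        have "q * x j = (\<Sum>a<k. adjv c a * bq (rs!a))" using xsol[OF c(1)] c(2) by simp
        moreover have "q \<noteq> 0" using mnz unfolding q_def .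
        ultimately show ?thesis by (metis nonzero_mult_div_cancel_left)
      qed
      finally show ?thesis .
    next
      case False
      then have "(\<Sum>i<l. D $$ (j,i) * bq i) = 0" using j unfolding D_def by (intro sum.neutral) auto
      then show ?thesis using xs j False by auto
    qed
    finally show ?thesis .
  qed
  have qxint: "of_int qi * x j \<in> \<int>" if j: "j < n" for j
  proof (cases "j \<in> set cs")
    case True
    define c where "c = idx cs j"
    have c: "c < k" "cs ! c = j" using idx_in[OF csd(1) True] len k_def c_def by auto
    have "q * x j = (\<Sum>a<k. adjv c a * bq (rs!a))" using xsol[OF c(1)] c(2) by simp
    also have "\<dots> \<in> \<int>" using adj_int c(1) unfolding bq_def by (intro Ints_sum Ints_mult) auto
    finally show ?thesis using qq by simp
  next
    case False then show ?thesis using xs j by auto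
  qed
  have absq: "\<bar>qi\<bar> > 0" using qi0 by simp
  have xsQ: "\<forall>j<n. of_int \<bar>qi\<bar> * x j \<in> \<int>"
  proof (intro allI impI)
    fix j assume "j < n"
    then have h: "of_int qi * x j \<in> \<int>" by (rule qxint)
    show "of_int \<bar>qi\<bar> * x j \<in> \<int>"
    proof (cases "qi \<ge> 0")
      case True then show ?thesis using h by simp
    next
      case False
      then have "of_int \<bar>qi\<bar> * x j = - (of_int qi * x j)" by simp
      then show ?thesis using h by simp
    qed
  qed
  have z0i: "\<forall>j<n. z0 j \<in> \<int>" unfolding z0_def by simp
  obtain z where z: "\<forall>j<n. z j \<in> \<int>" "\<forall>i<l. ap i z \<le> bq i" "\<forall>j<n. \<bar>z j - x j\<bar> \<le> of_nat n * of_int \<Delta>"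
    using proximity[OF absq xsQ feas z0i] apz0 by blast
  define d where "d = vec n (\<lambda>j. z j - x j)"
  have dc: "d \<in> carrier_vec n" unfolding d_def by simp
  have sumv: "(D *\<^sub>v bv + d) $ j = z j" if "j < n" for j
    using that Dc dc Dx[OF that] unfolding d_def by simp
  have "frac_norm_mat_le D \<Delta>"
    unfolding frac_norm_mat_le_def
  proof (intro allI impI)
    fix j i assume j: "j < dim_row D" and i: "i < dim_col D"
    then have j: "j < n" and i: "i < l" using Dc by auto
    show "frac_le (D $$ (j,i)) \<Delta>"
    proof (cases "j \<in> set cs \<and> i \<in> set rs")
      case True
      have a1: "idx cs j < k" "idx rs i < k" using idx_in[OF csd(1)] idx_in[OF rsd(1)] True len k_def by auto
      obtain p where p: "adjv (idx cs j) (idx rs i) = of_int p" using adj_int[OF a1] Ints_cases by blast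
      have "rat_of_int \<bar>p\<bar> \<le> of_int \<Delta>" using adj_bnd[OF a1] p by simp
      then have pb: "\<bar>p\<bar> \<le> \<Delta>" by simp
      have "D $$ (j,i) = of_int p / of_int qi" using True i j p qq unfolding D_def by simp
      then show ?thesis unfolding frac_le_def using pb qib qi0 by (intro exI[of _ p] exI[of _ qi]) simp
    next
      case False
      then have "D $$ (j,i) = 0" using i j unfolding D_def by auto
      then have "D $$ (j,i) = of_int 0 / of_int 1" by simp
      then show ?thesis unfolding frac_le_def using Delta1 by (intro exI[of _ 0] exI[of _ 1]) simp
    qed
  qed
  moreover have "frac_norm_vec_le d (int n * \<Delta>\<^sup>2)"
    unfolding frac_norm_vec_le_def
  proof (intro allI impI)
    fix j assume j: "j < dim_vec d"
    then have j: "j < n" using dc by simp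
    have "of_int qi * z j \<in> \<int>" using z(1) j by simp
    then have "of_int qi * z j - of_int qi * x j \<in> \<int>" using qxint[OF j] by simp
    then have "of_int qi * (z j - x j) \<in> \<int>" by (simp add: right_diff_distrib)
    then obtain p where p: "of_int qi * (z j - x j) = of_int p" using Ints_cases by blast
    have dj: "d $ j = of_int p / of_int qi" using p qi0 j unfolding d_def by (simp add: field_simps)
    have "rat_of_int \<bar>p\<bar> = \<bar>of_int p\<bar>" by simp
    also have "\<dots> = \<bar>of_int qi * (z j - x j)\<bar>" using p by simp
    also have "\<dots> = of_int \<bar>qi\<bar> * \<bar>z j - x j\<bar>" by (simp add: abs_mult)
    finally have "rat_of_int \<bar>p\<bar> = of_int \<bar>qi\<bar> * \<bar>z j - x j\<bar>" .
    also have "\<dots> \<le> of_int \<Delta> * (of_nat n * of_int \<Delta>)"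
      using z(3) j qib by (intro mult_mono) auto
    also have "\<dots> = rat_of_int (int n * \<Delta>\<^sup>2)" by (simp add: power2_eq_square)
    finally have pb: "\<bar>p\<bar> \<le> int n * \<Delta>\<^sup>2" by linarith
    have "\<Delta> \<le> int n * \<Delta>\<^sup>2"
    proof -
      have "1 \<le> int n" using j by simp
      moreover have "\<Delta> \<le> \<Delta>\<^sup>2"
      proof -
        have "1 * \<Delta> \<le> \<Delta> * \<Delta>" using Delta1 by (intro mult_right_mono) auto
        then show ?thesis by (simp add: power2_eq_square)
      qed
      have "1 * \<Delta>\<^sup>2 \<le> int n * \<Delta>\<^sup>2" using \<open>1 \<le> int n\<close> by (intro mult_right_mono) auto
      then show ?thesis using \<open>\<Delta> \<le> \<Delta>\<^sup>2\<close> by simp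
    qed
    then have "\<bar>qi\<bar> \<le> int n * \<Delta>\<^sup>2" using qib by simp
    then show "frac_le (d $ j) (int n * \<Delta>\<^sup>2)" unfolding frac_le_def using dj pb qi0 by (intro exI[of _ p] exI[of _ qi]) simp
  qed
  moreover have "\<forall>j < n. (D *\<^sub>v map_vec rat_of_int b + d) $ j \<in> \<int>"
    using sumv z(1) unfolding bv_def by simp
  moreover have "\<forall>i < l. (map_mat rat_of_int A *\<^sub>v (D *\<^sub>v map_vec rat_of_int b + d)) $ i \<le> rat_of_int (b $ i)"
  proof (intro allI impI)
    fix i assume i: "i < l"
    have v: "D *\<^sub>v bv + d \<in> carrier_vec n" by (rule add_carrier_vec[OF mult_mat_vec_carrier[OF Dc bv] dc])
    have "(map_mat rat_of_int A *\<^sub>v (D *\<^sub>v bv + d)) $ i = ap i (\<lambda>j. (D *\<^sub>v bv + d) $ j)"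
      unfolding mv_ap_rat[OF A i v] ap_def Af_def ..
    also have "\<dots> = ap i z" by (rule ap_cong, rule sumv)
    also have "\<dots> \<le> bq i" using z(2) i by simp
    finally show "(map_mat rat_of_int A *\<^sub>v (D *\<^sub>v map_vec rat_of_int b + d)) $ i \<le> rat_of_int (b $ i)"
      unfolding bv_def bq_def .
  qed
  ultimately show ?thesis using Dc dc by blast
qed


end
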